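(* Let $q$ be a prime power, let $\lambda \in \mathbb{F}_{q^n}\setminus\mathbb{F}_q$, $t = [\mathbb{F}_q(\lambda):\mathbb{F}_q]$, let $\overline{S}$ be an $\mathbb{F}_{q^t}$-subspace of $\mathbb{F}_{q^n}$ of $\mathbb{F}_{q^t}$-dimension $l>0$, $b \in \mathbb{F}_{q^n}^*$ with $\mathbb{F}_{q^t}\cap b\overline{S}=\{0\}$, $0<m<t$, $k = tl+m$ with $t+1 \le k \le n$, and $S = \overline{S} \oplus b\langle 1, \lambda, \ldots, \lambda^{m-1}\rangle_{\mathbb{F}_q}$, with $Y=\langle S\rangle_{\mathbb{F}_{q^t}} = \mathbb{F}_{q^n}$, $2m \ge t-1$ and $r = 2m+t(l-1)$. If $\mathcal{C}=\mathrm{Orb}(S)$ is an $r$-FWS code and $\mu \in \mathbb{F}_{q^n}^*$ with $\mu \notin H(\overline{S})$, then $\dim_{\mathbb{F}_q}(S \cap \mu S) = t(l-1)+2m$.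
   Context: $\mathrm{Orb}(S)=\{\alpha S:\alpha\in\mathbb{F}_{q^n}^*\}$. For an $\mathbb{F}_q$-subspace $V$ of $\mathbb{F}_{q^n}$, $H(V) = \{x \in \mathbb{F}_{q^n}^* : xV = V\} \cup \{0\}$. With $d(U,V)=2k-2\dim_{\mathbb{F}_q}(U\cap V)$ and $\omega_{2i}(\mathcal{C})=|\{\alpha S: \alpha\in\mathbb{F}_{q^n}^*, d(S,\alpha S)=2i\}|$ for $i=1,\dots,k$, $\mathcal{C}$ is an $r$-FWS code if $\omega_{2i}=0$ for $i=k-r+1,\ldots,k$ and $\omega_{2i}\neq 0$ for all $i=1,\ldots,k-r$. $\langle S\rangle_{\mathbb{F}_{q^t}}$ denotes the $\mathbb{F}_{q^t}$-span of $S$. *)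

theory Defs
  imports "HOL-Algebra.Embedded_Algebras" "HOL-Algebra.Generated_Fields"
begin

definition smul_set :: "('a, 'b) ring_scheme \<Rightarrow> 'a \<Rightarrow> 'a set \<Rightarrow> 'a set"
  where "smul_set R a V = (\<lambda>x. a \<otimes>\<^bsub>R\<^esub> x) ` V"

definition set_span :: "('a, 'b) ring_scheme \<Rightarrow> 'a set \<Rightarrow> 'a set \<Rightarrow> 'a set"
  where "set_span R L A = \<Union> {ring.Span R L Us | Us. set Us \<subseteq> A}"

text \<open>Subspace distance d(U,V) = 2k - 2 dim(U inter V), k = dim U (= dim V for orbit elements).\<close>
definition subspace_dist :: "('a, 'b) ring_scheme \<Rightarrow> 'a set \<Rightarrow> 'a set \<Rightarrow> 'a set \<Rightarrow> nat"
  where "subspace_dist R K U V = 2 * ring.dim R K U - 2 * ring.dim R K (U \<inter> V)"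

text \<open>omega_{2i}(Orb(S)) = number of distinct alpha S with d(S, alpha S) = 2i.\<close>
definition orb_weight :: "('a, 'b) ring_scheme \<Rightarrow> 'a set \<Rightarrow> 'a set \<Rightarrow> nat \<Rightarrow> nat"
  where "orb_weight R K S i =
    card {smul_set R \<alpha> S | \<alpha>. \<alpha> \<in> carrier R - {\<zero>\<^bsub>R\<^esub>} \<and>
                               subspace_dist R K S (smul_set R \<alpha> S) = 2 * i}"

definition is_FWS :: "('a, 'b) ring_scheme \<Rightarrow> 'a set \<Rightarrow> 'a set \<Rightarrow> nat \<Rightarrow> bool"
  where "is_FWS R K S r =
    (let k = ring.dim R K S in
      (\<forall>i \<in> {k - r + 1..k}. orb_weight R K S i = 0) \<and>
      (\<forall>i \<in> {1..k - r}. orb_weight R K S i \<noteq> 0))"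

definition stab :: "('a, 'b) ring_scheme \<Rightarrow> 'a set \<Rightarrow> 'a set"
  where "stab R V = {x \<in> carrier R - {\<zero>\<^bsub>R\<^esub>}. smul_set R x V = V} \<union> {\<zero>\<^bsub>R\<^esub>}"

end

theory Submission
  imports Defs
begin


lemma (in ring) fin_carrier_fd:
  assumes K: "subfield K R" and fin: "finite (carrier R)"
  shows "finite_dimension K (carrier R)"
proof -
  obtain xs where xs: "set xs = carrier R" using finite_list[OF fin] by blast
  have "Span K xs = carrier R"
    using Span_in_carrier[OF subfieldE(3)[OF K], of xs] Span_base_incl[OF K, of xs] xs by auto
  thus ?thesis using Span_finite_dimension[OF K, of xs] xs by simp
qed

lemma (in ring) subalg_fd:
  assumes K: "subfield K R" and fin: "finite (carrier R)" and V: "subalgebra K V R"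
  shows "finite_dimension K V"
  using subalbegra_incl_imp_finite_dimension[OF K fin_carrier_fd[OF K fin] V
      subalgebra_in_carrier[OF V]] .

lemma (in ring) dim_mono:
  assumes K: "subfield K R" and F: "finite_dimension K F" and E: "subalgebra K E R" and EF: "E \<subseteq> F"
  shows "dim K E \<le> dim K F"
proof -
  have fE: "finite_dimension K E"
    using subalbegra_incl_imp_finite_dimension[OF K F E EF] .
  obtain Us where Us: "set Us \<subseteq> carrier R" "independent K Us" "length Us = dim K E" "Span K Us = E"
    using exists_base[OF K finite_dimensionE[OF K fE]] unfolding over_def by blast
  have "set Us \<subseteq> F" using Span_base_incl[OF K Us(1)] Us(4) EF by auto
  thus ?thesis
    using independent_length_le_dimension[OF K finite_dimensionE[OF K F] Us(2)] Us(3)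
    unfolding over_def by simp
qed

lemma (in ring) dim_eq_imp_eq:
  assumes K: "subfield K R" and F: "finite_dimension K F" and E: "subalgebra K E R" and EF: "E \<subseteq> F"
    and eq: "dim K E = dim K F"
  shows "E = F"
proof -
  have fE: "finite_dimension K E"
    using subalbegra_incl_imp_finite_dimension[OF K F E EF] .
  obtain Us where Us: "set Us \<subseteq> carrier R" "independent K Us" "length Us = dim K E" "Span K Us = E"
    using exists_base[OF K finite_dimensionE[OF K fE]] unfolding over_def by blast
  have "set Us \<subseteq> F" using Span_base_incl[OF K Us(1)] Us(4) EF by auto
  thus ?thesis
    using independent_length_eq_dimension[OF K finite_dimensionE[OF K F] Us(2)] Us(3,4) eq
    unfolding over_def by simp
qed

lemma (in ring) subalg_sub:
  assumes "subalgebra L V R" "K \<subseteq> L" shows "subalgebra K V R"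
  using assms unfolding subalgebra_def subalgebra_axioms_def by auto

lemma (in ring) Span_dim_le:
  assumes K: "subfield K R" and Us: "set Us \<subseteq> carrier R"
  shows "\<exists>n \<le> length Us. dimension n K (Span K Us)"
  using Us
proof (induction Us)
  case Nil thus ?case by auto
next
  case (Cons u Us)
  then obtain n where n: "n \<le> length Us" "dimension n K (Span K Us)" by auto
  show ?case
  proof (cases "u \<in> Span K Us")
    case True
    hence "Span K (u # Us) = Span K Us"
      using Span_base_incl[OF K] mono_Span_subset[OF K]
      by (metis Cons.prems insert_subset list.simps(15) subset_antisym)
    thus ?thesis using n by (intro exI[of _ n]) auto
  next
    case False
    have "dimension (Suc n) K (Span K (u # Us))"
      using Suc_dim[OF _ False n(2)] Cons.prems by simp
    thus ?thesis using n by auto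
  qed
qed

lemma (in ring) Span_dim_le':
  assumes K: "subfield K R" and Us: "set Us \<subseteq> carrier R"
  shows "dim K (Span K Us) \<le> length Us"
proof -
  obtain n where n: "n \<le> length Us" "dimension n K (Span K Us)" using Span_dim_le[OF K Us] by blast
  have "dim K (Span K Us) = n" using dimI[OF K n(2)] unfolding over_def .
  thus ?thesis using n(1) by simp
qed

lemma (in cring) combine_smul:
  "\<lbrakk> set Ks \<subseteq> carrier R; set Us \<subseteq> carrier R; a \<in> carrier R \<rbrakk> \<Longrightarrow>
     a \<otimes> combine Ks Us = combine Ks (map ((\<otimes>) a) Us)"
  by (induct Ks Us rule: combine.induct) (auto simp add: r_distr m_lcomm)

lemma (in cring) smul_Span:
  assumes K: "subfield K R" and Us: "set Us \<subseteq> carrier R" and a: "a \<in> carrier R"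
  shows "smul_set R a (Span K Us) = Span K (map ((\<otimes>) a) Us)"
proof -
  have KC: "K \<subseteq> carrier R" using subfieldE(3)[OF K] .
  have Us': "set (map ((\<otimes>) a) Us) \<subseteq> carrier R" using Us a by auto
  show ?thesis
    unfolding smul_set_def Span_eq_combine_set[OF K Us] Span_eq_combine_set[OF K Us']
  proof (intro equalityI subsetI)
    fix y assume "y \<in> (\<otimes>) a ` {combine Ks Us |Ks. set Ks \<subseteq> K}"
    then obtain Ks where Ks: "set Ks \<subseteq> K" "y = a \<otimes> combine Ks Us" by blast
    have KsC: "set Ks \<subseteq> carrier R" using Ks(1) KC by blast
    have "y = combine Ks (map ((\<otimes>) a) Us)" using combine_smul[OF KsC Us a] Ks(2) by simp
    thus "y \<in> {combine Ks (map ((\<otimes>) a) Us) |Ks. set Ks \<subseteq> K}" using Ks(1) by blast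
  next
    fix y assume "y \<in> {combine Ks (map ((\<otimes>) a) Us) |Ks. set Ks \<subseteq> K}"
    then obtain Ks where Ks: "set Ks \<subseteq> K" "y = combine Ks (map ((\<otimes>) a) Us)" by blast
    have KsC: "set Ks \<subseteq> carrier R" using Ks(1) KC by blast
    have "y = a \<otimes> combine Ks Us" using combine_smul[OF KsC Us a] Ks(2) by simp
    thus "y \<in> (\<otimes>) a ` {combine Ks Us |Ks. set Ks \<subseteq> K}" using Ks(1) by blast
  qed
qed

lemma (in field) smul_indep:
  assumes K: "subfield K R" and a: "a \<in> carrier R" "a \<noteq> \<zero>" and I: "independent K Us"
  shows "independent K (map ((\<otimes>) a) Us)"
proof -
  have KC: "K \<subseteq> carrier R" using subfieldE(3)[OF K] .
  have Us: "set Us \<subseteq> carrier R" using independent_in_carrier[OF I] .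
  have Us': "set (map ((\<otimes>) a) Us) \<subseteq> carrier R" using Us a by auto
  show ?thesis
  proof (rule trivial_combine_imp_independent[OF K Us'])
    fix Ks assume Ks: "set Ks \<subseteq> K" and c: "combine Ks (map ((\<otimes>) a) Us) = \<zero>"
    have "a \<otimes> combine Ks Us = \<zero>" using combine_smul[OF _ Us a(1), of Ks] Ks KC c by auto
    moreover have "combine Ks Us \<in> carrier R" using Ks KC Us by (intro combine_in_carrier) auto
    ultimately have "combine Ks Us = \<zero>" using a integral by blast
    thus "set (take (length (map ((\<otimes>) a) Us)) Ks) \<subseteq> {\<zero>}"
      using independent_imp_trivial_combine[OF K I Ks] by simp
  qed
qed

lemma (in field) smul_dim:
  assumes K: "subfield K R" and a: "a \<in> carrier R" "a \<noteq> \<zero>" and fE: "finite_dimension K E"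
  shows "finite_dimension K (smul_set R a E)" "dim K (smul_set R a E) = dim K E"
proof -
  obtain Us where Us: "set Us \<subseteq> carrier R" "independent K Us" "length Us = dim K E" "Span K Us = E"
    using exists_base[OF K finite_dimensionE[OF K fE]] unfolding over_def by blast
  have "dimension (dim K E) K (smul_set R a E)"
    using dimensionI[OF K smul_indep[OF K a Us(2)]] smul_Span[OF K Us(1) a(1)] Us by simp
  thus "finite_dimension K (smul_set R a E)" "dim K (smul_set R a E) = dim K E"
    using finite_dimensionI dimI[OF K] unfolding over_def by auto
qed

lemma (in ring) dim_zero_space:
  assumes K: "subfield K R" shows "dim K {\<zero>} = 0"
  using dimI[OF K zero_dim] unfolding over_def .

lemma (in field) line_inter:
  assumes L: "subfield L R" and V: "subalgebra L V R" and v: "v \<in> carrier R" "v \<notin> V"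
  shows "V \<inter> Span L [v] = {\<zero>}"
proof -
  have LC: "L \<subseteq> carrier R" using subfieldE(3)[OF L] .
  have z: "\<zero> \<in> V" using subgroup.one_closed[OF subalgebra.axioms(1)[OF V]] by simp
  { fix x assume x: "x \<in> V" "x \<in> Span L [v]"
    then obtain c where c: "c \<in> L" "x = c \<otimes> v \<oplus> \<zero>"
      using line_extension_mem_iff[of x L v "{\<zero>}"] by auto
    have "x = \<zero>"
    proof (rule ccontr)
      assume "x \<noteq> \<zero>"
      hence cz: "c \<noteq> \<zero>" using c v LC by auto
      have "inv c \<otimes> x \<in> V" using subalgebra.smult_closed[OF V _ x(1)] subfield_m_inv(1)[OF L] c cz by auto
      moreover have "inv c \<otimes> x = v"
      proof -
        have cC: "c \<in> carrier R" using c(1) LC by auto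
        have icC: "inv c \<in> carrier R" using subfield_m_inv(1)[OF L, of c] c(1) cz LC by auto
        have "inv c \<otimes> x = (inv c \<otimes> c) \<otimes> v" using c(2) cC icC v(1) by (simp add: m_assoc)
        also have "\<dots> = v" using subfield_m_inv(3)[OF L, of c] c(1) cz v(1) by simp
        finally show ?thesis .
      qed
      ultimately show False using v by simp
    qed }
  moreover have "\<zero> \<in> Span L [v]" using Span_subgroup_props(2)[OF L, of "[v]"] v by simp
  ultimately show ?thesis using z by blast
qed

lemma (in field) line_dim:
  assumes L: "subfield L R" and v: "v \<in> carrier R" "v \<noteq> \<zero>"
  shows "finite_dimension L (Span L [v])" "dim L (Span L [v]) = 1"
proof -
  have "independent L [v]" using li_Cons[of v L "[]"] v by auto
  hence "dimension 1 L (Span L [v])" using dimensionI[OF L] by fastforce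
  thus "finite_dimension L (Span L [v])" "dim L (Span L [v]) = 1"
    using finite_dimensionI dimI[OF L] unfolding over_def by auto
qed

lemma (in field) add_line_dim:
  assumes L: "subfield L R" and fin: "finite (carrier R)" and V: "subalgebra L V R"
    and v: "v \<in> carrier R" "v \<notin> V"
  shows "dim L (V <+> Span L [v]) = dim L V + 1" "finite_dimension L (V <+> Span L [v])"
proof -
  have z: "\<zero> \<in> V" using subgroup.one_closed[OF subalgebra.axioms(1)[OF V]] by simp
  hence vz: "v \<noteq> \<zero>" using v by auto
  have fV: "finite_dimension L V" using subalg_fd[OF L fin V] .
  note ld = line_dim[OF L v(1) vz]
  show "finite_dimension L (V <+> Span L [v])" using sum_space_dim(1)[OF L fV ld(1)] .
  show "dim L (V <+> Span L [v]) = dim L V + 1"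
  proof -
    have "dim L (V <+> Span L [v]) = dim L V + dim L (Span L [v]) - dim L (V \<inter> Span L [v])"
      using sum_space_dim(2)[OF L fV ld(1)] unfolding over_def .
    also have "\<dots> = dim L V + 1"
      unfolding line_inter[OF L V v] dim_zero_space[OF L] ld(2) by simp
    finally show ?thesis .
  qed
qed

theorem theorem4p9:
  fixes R (structure) and K Sbar :: "'a set" and lam b \<mu> :: 'a and m l :: nat
  assumes fieldR: "field R" and finR: "finite (carrier R)" and subK: "subfield K R"
    and lam: "lam \<in> carrier R" "lam \<notin> K"
    and L_def: "L = generate_field R (insert lam K)"
    and t_def: "t = ring.dim R K L"
    and n_def: "n = ring.dim R K (carrier R)"
    and Sbar_sub: "subalgebra L Sbar R"
    and l_def: "l = ring.dim R L Sbar" and l_pos: "l > 0"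
    and b: "b \<in> carrier R" "b \<noteq> \<zero>"
    and bSbar: "L \<inter> smul_set R b Sbar = {\<zero>}"
    and m: "0 < m" "m < t"
    and k_def: "k = t * l + m" and k_bounds: "t + 1 \<le> k" "k \<le> n"
    and B_def: "B = smul_set R b (ring.Span R K (map (\<lambda>i. lam [^] i) [0..<m]))"
    and direct: "Sbar \<inter> B = {\<zero>}"
    and S_def: "S = Sbar <+>\<^bsub>R\<^esub> B"
    and Y: "set_span R L S = carrier R"
    and m_big: "2 * m \<ge> t - 1"
    and r_def: "r = 2 * m + t * (l - 1)"
    and FWS: "is_FWS R K S r"
    and mu: "\<mu> \<in> carrier R" "\<mu> \<noteq> \<zero>" "\<mu> \<notin> stab R Sbar"
  shows "ring.dim R K (S \<inter> smul_set R \<mu> S) = t * (l - 1) + 2 * m"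
proof -
  interpret field R by (rule fieldR)
  have KC: "K \<subseteq> carrier R" using subfieldE(3)[OF subK] .
  have insC: "insert lam K \<subseteq> carrier R" using KC lam(1) by auto
  have subL: "subfield L R" unfolding L_def by (rule generate_field_is_subfield[OF insC])
  have LC: "L \<subseteq> carrier R" using subfieldE(3)[OF subL] .
  have KL: "K \<subseteq> L" unfolding L_def using generate_field.incl[of _ "insert lam K" R] by blast
  have lamL: "lam \<in> L" unfolding L_def using generate_field.incl[of _ "insert lam K" R] by blast
  have powL: "lam [^] (i::nat) \<in> L" for i
  proof (induction i)
    case 0 thus ?case using subringE(3)[OF subfieldE(1)[OF subL]] by simp
  next
    case (Suc i) thus ?case using subringE(6)[OF subfieldE(1)[OF subL]] lamL by simp
  qed
  have subKL: "subalgebra K L R"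
    unfolding subalgebra_def subalgebra_axioms_def
    using generate_field_is_add_subgroup[OF insC] subringE(6)[OF subfieldE(1)[OF subL]] KL
    unfolding L_def[symmetric] by blast
  have fdKC: "finite_dimension K (carrier R)" using fin_carrier_fd[OF subK finR] .
  have fdLC: "finite_dimension L (carrier R)" using fin_carrier_fd[OF subL finR] .
  have fdKL: "finite_dimension K L" using subalg_fd[OF subK finR subKL] .
  have SbarK: "subalgebra K Sbar R" using subalg_sub[OF Sbar_sub KL] .
  have SbarC: "Sbar \<subseteq> carrier R" using subalgebra_in_carrier[OF Sbar_sub] .
  have fdLS: "finite_dimension L Sbar" using subalg_fd[OF subL finR Sbar_sub] .
  have fdKS: "finite_dimension K Sbar" using subalg_fd[OF subK finR SbarK] .
  have dSbar: "dim K Sbar = t * l"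
    using telescopic_base_dim(2)[OF subK subL fdKL fdLS] t_def l_def unfolding over_def by simp
  define ls where "ls = map (\<lambda>i. lam [^] i) [0..<m]"
  have lsL: "set ls \<subseteq> L" unfolding ls_def using powL by auto
  have lsC: "set ls \<subseteq> carrier R" using lsL LC by auto
  have blsC: "set (map ((\<otimes>) b) ls) \<subseteq> carrier R" using lsC b(1) by auto
  have Beq: "B = Span K (map ((\<otimes>) b) ls)"
    unfolding B_def ls_def[symmetric] using smul_Span[OF subK lsC b(1)] .
  have fdB: "finite_dimension K B" unfolding Beq using Span_finite_dimension[OF subK blsC] .
  have dB: "dim K B \<le> m" unfolding Beq using Span_dim_le'[OF subK blsC] unfolding ls_def by simp
  have oneL: "\<one> \<in> set ls" unfolding ls_def using m(1)
    by (auto intro!: image_eqI[of _ _ 0])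
  have bB: "b \<in> B"
  proof -
    have "\<one> \<in> Span K ls" using Span_base_incl[OF subK lsC] oneL by auto
    thus ?thesis unfolding B_def ls_def[symmetric] smul_set_def using b(1)
      by (auto intro!: image_eqI[of _ _ \<one>])
  qed
  have bnS: "b \<notin> Sbar" using direct bB b(2) by auto
  have zB: "\<zero> \<in> B" using Span_subgroup_props(2)[OF subK blsC] Beq by simp
  have fdS: "finite_dimension K S" unfolding S_def using sum_space_dim(1)[OF subK fdKS fdB] .
  have dS: "dim K S = t * l + dim K B"
    using sum_space_dim(2)[OF subK fdKS fdB] direct dim_zero_space[OF subK] dSbar
    unfolding over_def S_def[symmetric] by simp
  have SK: "subalgebra K S R" using finite_dimension_imp_subalgebra[OF subK fdS] .
  have SC: "S \<subseteq> carrier R" using subalgebra_in_carrier[OF SK] .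
  have SbarS: "Sbar \<subseteq> S"
  proof
    fix x assume x: "x \<in> Sbar"
    hence "x = x \<oplus> \<zero>" using SbarC by auto
    thus "x \<in> S" unfolding S_def set_add_def' using x zB by blast
  qed
  have bspan: "Span L [b] = line_extension L b {\<zero>}" by simp
  have WL: "finite_dimension L (Sbar <+> Span L [b])"
    using add_line_dim(2)[OF subL finR Sbar_sub b(1) bnS] .
  have WsubL: "subalgebra L (Sbar <+> Span L [b]) R"
    using finite_dimension_imp_subalgebra[OF subL WL] .
  have SW: "S \<subseteq> Sbar <+> Span L [b]"
  proof
    fix s assume "s \<in> S"
    then obtain h y where hy: "h \<in> Sbar" "y \<in> B" "s = h \<oplus> y" unfolding S_def set_add_def' by blast
    then obtain z where z: "z \<in> Span K ls" "y = b \<otimes> z"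
      unfolding B_def ls_def[symmetric] smul_set_def by blast
    have zL: "z \<in> L" using subalgebra_Span_incl[OF subK subKL lsL] z(1) by blast
    have "y = z \<otimes> b \<oplus> \<zero>" using z(2) zL LC b(1) m_comm by auto
    hence "y \<in> Span L [b]" unfolding bspan line_extension_mem_iff using zL by blast
    thus "s \<in> Sbar <+> Span L [b]" unfolding set_add_def' using hy by blast
  qed
  have Weq: "Sbar <+> Span L [b] = carrier R"
  proof
    show "Sbar <+> Span L [b] \<subseteq> carrier R" using subalgebra_in_carrier[OF WsubL] .
    show "carrier R \<subseteq> Sbar <+> Span L [b]"
    proof
      fix x assume "x \<in> carrier R"
      then obtain Us where "set Us \<subseteq> S" "x \<in> Span L Us" using Y unfolding set_span_def by auto
      thus "x \<in> Sbar <+> Span L [b]"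
        using subalgebra_Span_incl[OF subL WsubL] SW by blast
    qed
  qed
  have dLC: "dim L (carrier R) = l + 1"
    using add_line_dim(1)[OF subL finR Sbar_sub b(1) bnS] Weq l_def by simp
  have nval: "n = t * (l + 1)"
    using telescopic_base_dim(2)[OF subK subL fdKL fdLC] t_def n_def dLC unfolding over_def by simp
  obtain x where x: "x \<in> Sbar" "\<mu> \<otimes> x \<notin> Sbar"
  proof (rule ccontr)
    assume "\<not> thesis"
    hence all: "\<And>x. x \<in> Sbar \<Longrightarrow> \<mu> \<otimes> x \<in> Sbar" using that by blast
    have sub: "smul_set R \<mu> Sbar \<subseteq> Sbar" unfolding smul_set_def using all by blast
    have inj: "inj_on ((\<otimes>) \<mu>) Sbar"
      using m_lcancel[OF mu(2) mu(1)] SbarC by (auto simp: inj_on_def)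
    have finS: "finite Sbar" using finite_subset[OF SbarC finR] .
    have "card (smul_set R \<mu> Sbar) = card Sbar" unfolding smul_set_def using card_image[OF inj] .
    hence "smul_set R \<mu> Sbar = Sbar" using card_subset_eq[OF finS sub] by simp
    hence "\<mu> \<in> stab R Sbar" unfolding stab_def using mu(1,2) by auto
    thus False using mu(3) by simp
  qed
  define v where "v = \<mu> \<otimes> x"
  have vC: "v \<in> carrier R" unfolding v_def using mu(1) x(1) SbarC by auto
  have vS: "v \<notin> Sbar" unfolding v_def using x(2) .
  have V2L: "finite_dimension L (Sbar <+> Span L [v])" using add_line_dim(2)[OF subL finR Sbar_sub vC vS] .
  have V2sub: "subalgebra L (Sbar <+> Span L [v]) R" using finite_dimension_imp_subalgebra[OF subL V2L] .
  have V2eq: "Sbar <+> Span L [v] = carrier R"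
    using dim_eq_imp_eq[OF subL fdLC V2sub subalgebra_in_carrier[OF V2sub]]
          add_line_dim(1)[OF subL finR Sbar_sub vC vS] dLC l_def by simp
  have muSC: "smul_set R \<mu> S \<subseteq> carrier R" unfolding smul_set_def using SC mu(1) by auto
  have sumeq: "S <+> smul_set R \<mu> S = carrier R"
  proof
    show "S <+> smul_set R \<mu> S \<subseteq> carrier R" unfolding set_add_def' using SC muSC by auto
    show "carrier R \<subseteq> S <+> smul_set R \<mu> S"
    proof
      fix w assume "w \<in> carrier R"
      then obtain h y where hy: "h \<in> Sbar" "y \<in> Span L [v]" "w = h \<oplus> y"
        unfolding V2eq[symmetric] set_add_def' by blast
      then obtain c where c: "c \<in> L" "y = c \<otimes> v \<oplus> \<zero>"
        using line_extension_mem_iff[of y L v "{\<zero>}"] by auto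
      have cx: "c \<otimes> x \<in> Sbar" using subalgebra.smult_closed[OF Sbar_sub c(1) x(1)] .
      have "y = \<mu> \<otimes> (c \<otimes> x)" using c LC mu(1) x(1) SbarC unfolding v_def
        by (simp add: m_lcomm subsetD)
      hence "y \<in> smul_set R \<mu> S" unfolding smul_set_def using cx SbarS by blast
      thus "w \<in> S <+> smul_set R \<mu> S" unfolding set_add_def' using hy SbarS by blast
    qed
  qed
  note sd = smul_dim[OF subK mu(1) mu(2) fdS]
  have muSK: "subalgebra K (smul_set R \<mu> S) R" using finite_dimension_imp_subalgebra[OF subK sd(1)] .
  have grass: "dim K (carrier R) = dim K S + dim K S - dim K (S \<inter> smul_set R \<mu> S)"
    using sum_space_dim(2)[OF subK fdS sd(1)] sd(2) sumeq unfolding over_def by simp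
  have jle: "dim K (S \<inter> smul_set R \<mu> S) \<le> dim K S"
    using dim_mono[OF subK fdS subalgebra_inter[OF SK muSK]] by blast
  define j where "j = dim K (S \<inter> smul_set R \<mu> S)"
  define dS' where "dS' = dim K S"
  have key: "n + j = 2 * dS'" using grass jle n_def unfolding j_def dS'_def by linarith
  have tl: "t * (l + 1) = t * l + t" "t * (l - 1) + t = t * l" using l_pos
    by (simp_all add: algebra_simps)
  have dSle: "dS' \<le> t * l + m" using dS dB unfolding dS'_def by simp
  have upper: "j \<le> r" using key nval dSle tl r_def m by linarith
  have jlt: "j < dS'" using key nval dSle tl m by linarith
  have lower: "r \<le> j"
  proof (rule ccontr)
    assume "\<not> r \<le> j"
    hence jr: "j < r" by simp
    define i where "i = dS' - j"
    have irange: "i \<in> {dS' - r + 1..dS'}" unfolding i_def using jr jlt by auto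
    have "orb_weight R K S i = 0"
      using FWS irange unfolding is_FWS_def Let_def dS'_def by blast
    moreover have "finite {smul_set R \<alpha> S | \<alpha>. \<alpha> \<in> carrier R - {\<zero>} \<and>
                               subspace_dist R K S (smul_set R \<alpha> S) = 2 * i}"
      by (rule finite_subset[of _ "(\<lambda>\<alpha>. smul_set R \<alpha> S) ` carrier R"]) (use finR in auto)
    moreover have "smul_set R \<mu> S \<in> {smul_set R \<alpha> S | \<alpha>. \<alpha> \<in> carrier R - {\<zero>} \<and>
                               subspace_dist R K S (smul_set R \<alpha> S) = 2 * i}"
    proof -
      have "subspace_dist R K S (smul_set R \<mu> S) = 2 * dS' - 2 * j"
        unfolding subspace_dist_def j_def dS'_def ..
      also have "\<dots> = 2 * i" unfolding i_def by (simp add: diff_mult_distrib2)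
      finally show ?thesis using mu(1,2) by blast
    qed
    ultimately show False unfolding orb_weight_def by auto
  qed
  show ?thesis using upper lower r_def unfolding j_def by simp
qed

end
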